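(* For every $n\ge1$ and every $\sigma\in S_n$, $$\mathrm{lsg(op)}(\sigma)+\mathrm{rsg(op)}(\sigma)=\mathrm{lsg(clos)}(\sigma)+\mathrm{rsg(clos)}(\sigma).$$
   Context: A permutation $\sigma\in S_n$ is written as the word $\sigma(1)\cdots\sigma(n)$; its runs are the maximal contiguous increasing segments. A run of length $\ge2$ is proper. $\mathrm{op}(\sigma)$ is the set of first elements of proper runs, $\mathrm{clos}(\sigma)$ the set of last elements of proper runs. For $i\in\{1,\dots,n\}$, $\mathrm{lsg}(i)$ is the number of runs lying strictly to the left of $i$ (not containing $i$) that contain both an element smaller and an element greater than $i$; $\mathrm{rsg}(i)$ is the analogous number to the right. $\mathrm{lsg}(X)(\sigma)=\sum_{i\in X(\sigma)}\mathrm{lsg}(i)$, $\mathrm{rsg}(X)(\sigma)=\sum_{i\in X(\sigma)}\mathrm{rsg}(i)$ for $X\in\{\mathrm{op},\mathrm{clos}\}$. *)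

theory Defs
  imports "HOL-Combinatorics.Permutations"
begin

(* A permutation sigma of {1..n} (sigma permutes {1..n}); its word is sigma 1 ... sigma n.
   A run is given by its interval of positions {a..b}: a maximal contiguous increasing segment. *)
definition is_run :: "(nat \<Rightarrow> nat) \<Rightarrow> nat \<Rightarrow> nat \<Rightarrow> nat \<Rightarrow> bool" where
  "is_run \<sigma> n a b \<longleftrightarrow> 1 \<le> a \<and> a \<le> b \<and> b \<le> n
     \<and> (\<forall>p. a \<le> p \<and> p < b \<longrightarrow> \<sigma> p < \<sigma> (Suc p))
     \<and> (a = 1 \<or> \<sigma> (a - 1) > \<sigma> a)
     \<and> (b = n \<or> \<sigma> b > \<sigma> (Suc b))"

definition op_set :: "(nat \<Rightarrow> nat) \<Rightarrow> nat \<Rightarrow> nat set" where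
  "op_set \<sigma> n = {\<sigma> a | a b. is_run \<sigma> n a b \<and> a < b}"

definition clos_set :: "(nat \<Rightarrow> nat) \<Rightarrow> nat \<Rightarrow> nat set" where
  "clos_set \<sigma> n = {\<sigma> b | a b. is_run \<sigma> n a b \<and> a < b}"

definition straddles :: "(nat \<Rightarrow> nat) \<Rightarrow> nat \<Rightarrow> nat \<Rightarrow> nat \<Rightarrow> bool" where
  "straddles \<sigma> a b i \<longleftrightarrow> (\<exists>p\<in>{a..b}. \<sigma> p < i) \<and> (\<exists>q\<in>{a..b}. i < \<sigma> q)"

definition lsg :: "(nat \<Rightarrow> nat) \<Rightarrow> nat \<Rightarrow> nat \<Rightarrow> nat" where
  "lsg \<sigma> n i = card {(a, b). is_run \<sigma> n a b \<and> b < inv \<sigma> i \<and> straddles \<sigma> a b i}"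

definition rsg :: "(nat \<Rightarrow> nat) \<Rightarrow> nat \<Rightarrow> nat \<Rightarrow> nat" where
  "rsg \<sigma> n i = card {(a, b). is_run \<sigma> n a b \<and> inv \<sigma> i < a \<and> straddles \<sigma> a b i}"

end

theory Submission
  imports Defs
begin

lemma run_mono:
  assumes "is_run \<sigma> n a b" "a \<le> p" "p < q" "q \<le> b"
  shows "\<sigma> p < \<sigma> q"
  using assms(3,4)
proof (induction q)
  case 0 then show ?case by simp
next
  case (Suc q)
  have step: "\<sigma> q < \<sigma> (Suc q)" using assms(1,2) Suc.prems unfolding is_run_def by auto
  show ?case
  proof (cases "p = q")
    case True then show ?thesis using step by simp
  next
    case False
    then have "\<sigma> p < \<sigma> q" using Suc by auto
    then show ?thesis using step by simp
  qed
qed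

lemma run_le:
  assumes "is_run \<sigma> n a b" "a \<le> p" "p \<le> b"
  shows "\<sigma> a \<le> \<sigma> p \<and> \<sigma> p \<le> \<sigma> b"
  using run_mono[OF assms(1), of a p] run_mono[OF assms(1), of p b] assms
  by (cases "a = p"; cases "p = b") auto

lemma straddles_iff:
  assumes "is_run \<sigma> n a b"
  shows "straddles \<sigma> a b i \<longleftrightarrow> \<sigma> a < i \<and> i < \<sigma> b"
proof
  assume "straddles \<sigma> a b i"
  then obtain p q where "p \<in> {a..b}" "\<sigma> p < i" "q \<in> {a..b}" "i < \<sigma> q"
    unfolding straddles_def by auto
  then show "\<sigma> a < i \<and> i < \<sigma> b" using run_le[OF assms, of p] run_le[OF assms, of q] by auto
next
  assume "\<sigma> a < i \<and> i < \<sigma> b"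
  moreover have "a \<le> b" using assms unfolding is_run_def by auto
  ultimately show "straddles \<sigma> a b i" unfolding straddles_def by auto
qed

lemma run_sep1:
  assumes "is_run \<sigma> n a b" "is_run \<sigma> n a' b'" "a < a'"
  shows "b < a'"
proof (rule ccontr)
  assume "\<not> b < a'"
  then have h: "a \<le> a' - 1" "a' - 1 < b" using assms by auto
  then have "\<sigma> (a' - 1) < \<sigma> (Suc (a' - 1))" using assms(1) unfolding is_run_def by auto
  moreover have "Suc (a' - 1) = a'" using assms(3) by auto
  moreover have "a' \<noteq> 1" using assms(1,3) unfolding is_run_def by auto
  ultimately show False using assms(2) unfolding is_run_def by auto
qed

lemma run_sep2:
  assumes "is_run \<sigma> n a b" "is_run \<sigma> n a' b'" "b < b'"
  shows "b < a'"
proof (rule ccontr)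
  assume "\<not> b < a'"
  then have "\<sigma> b < \<sigma> (Suc b)" using assms(2,3) unfolding is_run_def by auto
  moreover have "b \<noteq> n" using assms(2,3) unfolding is_run_def by auto
  ultimately show False using assms(1) unfolding is_run_def by auto
qed

lemma run_unique_start:
  assumes "is_run \<sigma> n a b" "is_run \<sigma> n a b'"
  shows "b = b'"
  using run_sep2[OF assms(1,2)] run_sep2[OF assms(2,1)] assms unfolding is_run_def
  by (metis linorder_neqE_nat not_le)

lemma run_unique_end:
  assumes "is_run \<sigma> n a b" "is_run \<sigma> n a' b"
  shows "a = a'"
  using run_sep1[OF assms(1,2)] run_sep1[OF assms(2,1)] assms unfolding is_run_def
  by (metis linorder_neqE_nat not_le)

lemma lo_hi_distinct:
  assumes "inj \<sigma>" "is_run \<sigma> n a b" "is_run \<sigma> n a' b'" "\<sigma> a = \<sigma> b'"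
  shows "a = a' \<and> b = b'"
proof -
  have e: "a = b'" using assms(1,4) by (simp add: inj_eq)
  have "a' \<le> a" using assms(3) e unfolding is_run_def by auto
  moreover have "\<not> a' < a" using run_sep1[OF assms(3,2)] e by auto
  ultimately have "a' = a" by simp
  then show ?thesis using run_unique_start[OF assms(2), of b'] assms(3) e by auto
qed

lemma count_swap:
  fixes lo hi :: "'a \<Rightarrow> 'b::linorder"
  assumes fin: "finite P" and le: "\<forall>x\<in>P. lo x \<le> hi x"
    and dist: "\<forall>x\<in>P. \<forall>y\<in>P. x \<noteq> y \<longrightarrow> lo x \<noteq> lo y \<and> hi x \<noteq> hi y \<and> lo x \<noteq> hi y"
  shows "(\<Sum>s\<in>{s\<in>P. lo s < hi s}. card {r\<in>P. lo r < lo s \<and> lo s < hi r})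
       = (\<Sum>s\<in>{s\<in>P. lo s < hi s}. card {r\<in>P. lo r < hi s \<and> hi s < hi r})"
proof -
  define Q where "Q = {s\<in>P. lo s < hi s}"
  define S1 where "S1 = Sigma Q (\<lambda>s. {r\<in>P. lo r < lo s \<and> lo s < hi r})"
  define S2 where "S2 = Sigma Q (\<lambda>s. {r\<in>P. lo r < hi s \<and> hi s < hi r})"
  define N where "N = {(s,r). s \<in> Q \<and> r \<in> P \<and> lo r < lo s \<and> hi s < hi r}"
  define X where "X = {(s,r). s \<in> P \<and> r \<in> P \<and> lo r < lo s \<and> lo s < hi r \<and> hi r < hi s}"
  define Y where "Y = {(s,r). s \<in> P \<and> r \<in> P \<and> lo s < lo r \<and> lo r < hi s \<and> hi s < hi r}"
  have finQ: "finite Q" using fin unfolding Q_def by auto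
  have c1: "card S1 = (\<Sum>s\<in>Q. card {r\<in>P. lo r < lo s \<and> lo s < hi r})"
    unfolding S1_def by (rule card_SigmaI) (use finQ fin in auto)
  have c2: "card S2 = (\<Sum>s\<in>Q. card {r\<in>P. lo r < hi s \<and> hi s < hi r})"
    unfolding S2_def by (rule card_SigmaI) (use finQ fin in auto)
  have finPP: "finite (P \<times> P)" using fin by auto
  have finN: "finite N" by (rule finite_subset[OF _ finPP]) (auto simp: N_def Q_def)
  have finX: "finite X" by (rule finite_subset[OF _ finPP]) (auto simp: X_def)
  have finY: "finite Y" by (rule finite_subset[OF _ finPP]) (auto simp: Y_def)
  have S1eq: "S1 = N \<union> X"
  proof
    show "S1 \<subseteq> N \<union> X"
    proof
      fix z assume z: "z \<in> S1"
      then obtain s r where zz: "z = (s,r)" "s \<in> Q" "r \<in> P" "lo r < lo s" "lo s < hi r"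
        unfolding S1_def by auto
      then have "s \<noteq> r" by auto
      then have "hi s \<noteq> hi r" using dist zz by (auto simp: Q_def)
      then show "z \<in> N \<union> X" using zz by (cases "hi s < hi r") (auto simp: N_def X_def Q_def)
    qed
    show "N \<union> X \<subseteq> S1" unfolding N_def X_def S1_def Q_def
      using le by (auto intro: less_le_trans le_less_trans)
  qed
  have S2eq: "S2 = N \<union> Y"
  proof
    show "S2 \<subseteq> N \<union> Y"
    proof
      fix z assume z: "z \<in> S2"
      then obtain s r where zz: "z = (s,r)" "s \<in> Q" "r \<in> P" "lo r < hi s" "hi s < hi r"
        unfolding S2_def by auto
      then have "s \<noteq> r" by auto
      then have "lo s \<noteq> lo r" using dist zz by (auto simp: Q_def)
      then show "z \<in> N \<union> Y" using zz by (cases "lo r < lo s") (auto simp: N_def Y_def Q_def)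
    qed
    show "N \<union> Y \<subseteq> S2" unfolding N_def Y_def S2_def Q_def
      using le by (auto intro: less_le_trans le_less_trans)
  qed
  have d1: "N \<inter> X = {}" unfolding N_def X_def by auto
  have d2: "N \<inter> Y = {}" unfolding N_def Y_def by auto
  have Yimg: "Y = (\<lambda>(s,r). (r,s)) ` X" unfolding X_def Y_def by auto
  have "inj_on (\<lambda>(s,r). (r,s)) X" by (auto simp: inj_on_def)
  then have cXY: "card Y = card X" using Yimg card_image by metis
  have "card S1 = card S2"
    unfolding S1eq S2eq using card_Un_disjoint[OF finN finX d1] card_Un_disjoint[OF finN finY d2] cXY
    by simp
  then show ?thesis using c1 c2 unfolding Q_def by simp
qed


lemma runs_finite: "finite {(a,b). is_run \<sigma> n a b}"
  by (rule finite_subset[of _ "{1..n} \<times> {1..n}"]) (auto simp: is_run_def)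

lemma lsg_rsg_start:
  assumes "inj \<sigma>" "is_run \<sigma> n a0 b0"
  shows "lsg \<sigma> n (\<sigma> a0) + rsg \<sigma> n (\<sigma> a0) = card {(a,b). is_run \<sigma> n a b \<and> \<sigma> a < \<sigma> a0 \<and> \<sigma> a0 < \<sigma> b}"
proof -
  define L where "L = {(a, b). is_run \<sigma> n a b \<and> b < a0 \<and> straddles \<sigma> a b (\<sigma> a0)}"
  define R where "R = {(a, b). is_run \<sigma> n a b \<and> a0 < a \<and> straddles \<sigma> a b (\<sigma> a0)}"
  have inv: "inv \<sigma> (\<sigma> a0) = a0" using assms(1) by (simp add: inv_f_f)
  have fL: "finite L" by (rule finite_subset[OF _ runs_finite[of \<sigma> n]]) (auto simp: L_def)
  have fR: "finite R" by (rule finite_subset[OF _ runs_finite[of \<sigma> n]]) (auto simp: R_def)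
  have d: "L \<inter> R = {}" unfolding L_def R_def is_run_def by auto
  have u: "L \<union> R = {(a,b). is_run \<sigma> n a b \<and> \<sigma> a < \<sigma> a0 \<and> \<sigma> a0 < \<sigma> b}"
  proof
    show "L \<union> R \<subseteq> {(a,b). is_run \<sigma> n a b \<and> \<sigma> a < \<sigma> a0 \<and> \<sigma> a0 < \<sigma> b}"
      unfolding L_def R_def using straddles_iff by fastforce
  next
    show "{(a,b). is_run \<sigma> n a b \<and> \<sigma> a < \<sigma> a0 \<and> \<sigma> a0 < \<sigma> b} \<subseteq> L \<union> R"
    proof (rule subsetI)
      fix z assume "z \<in> {(a,b). is_run \<sigma> n a b \<and> \<sigma> a < \<sigma> a0 \<and> \<sigma> a0 < \<sigma> b}"
      then obtain a b where z: "z = (a,b)" and h: "is_run \<sigma> n a b" "\<sigma> a < \<sigma> a0" "\<sigma> a0 < \<sigma> b" by auto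
      have st: "straddles \<sigma> a b (\<sigma> a0)" using straddles_iff[OF h(1)] h by auto
      have "a \<noteq> a0" using h by auto
      then have "b < a0 \<or> a0 < a" using run_sep1[OF h(1) assms(2)] by linarith
      then show "z \<in> L \<union> R" using h st z unfolding L_def R_def by auto
    qed
  qed
  have "lsg \<sigma> n (\<sigma> a0) + rsg \<sigma> n (\<sigma> a0) = card L + card R"
    unfolding lsg_def rsg_def inv L_def R_def by simp
  also have "\<dots> = card (L \<union> R)" using card_Un_disjoint[OF fL fR d] by simp
  finally show ?thesis using u by simp
qed

lemma lsg_rsg_end:
  assumes "inj \<sigma>" "is_run \<sigma> n a0 b0"
  shows "lsg \<sigma> n (\<sigma> b0) + rsg \<sigma> n (\<sigma> b0) = card {(a,b). is_run \<sigma> n a b \<and> \<sigma> a < \<sigma> b0 \<and> \<sigma> b0 < \<sigma> b}"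
proof -
  define L where "L = {(a, b). is_run \<sigma> n a b \<and> b < b0 \<and> straddles \<sigma> a b (\<sigma> b0)}"
  define R where "R = {(a, b). is_run \<sigma> n a b \<and> b0 < a \<and> straddles \<sigma> a b (\<sigma> b0)}"
  have inv: "inv \<sigma> (\<sigma> b0) = b0" using assms(1) by (simp add: inv_f_f)
  have fL: "finite L" by (rule finite_subset[OF _ runs_finite[of \<sigma> n]]) (auto simp: L_def)
  have fR: "finite R" by (rule finite_subset[OF _ runs_finite[of \<sigma> n]]) (auto simp: R_def)
  have d: "L \<inter> R = {}" unfolding L_def R_def is_run_def by auto
  have u: "L \<union> R = {(a,b). is_run \<sigma> n a b \<and> \<sigma> a < \<sigma> b0 \<and> \<sigma> b0 < \<sigma> b}"
  proof
    show "L \<union> R \<subseteq> {(a,b). is_run \<sigma> n a b \<and> \<sigma> a < \<sigma> b0 \<and> \<sigma> b0 < \<sigma> b}"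
      unfolding L_def R_def using straddles_iff by fastforce
  next
    show "{(a,b). is_run \<sigma> n a b \<and> \<sigma> a < \<sigma> b0 \<and> \<sigma> b0 < \<sigma> b} \<subseteq> L \<union> R"
    proof (rule subsetI)
      fix z assume "z \<in> {(a,b). is_run \<sigma> n a b \<and> \<sigma> a < \<sigma> b0 \<and> \<sigma> b0 < \<sigma> b}"
      then obtain a b where z: "z = (a,b)" and h: "is_run \<sigma> n a b" "\<sigma> a < \<sigma> b0" "\<sigma> b0 < \<sigma> b" by auto
      have st: "straddles \<sigma> a b (\<sigma> b0)" using straddles_iff[OF h(1)] h by auto
      have "b \<noteq> b0" using h by auto
      then have "b < b0 \<or> b0 < a" using run_sep2[OF assms(2) h(1)] by linarith
      then show "z \<in> L \<union> R" using h st z unfolding L_def R_def by auto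
    qed
  qed
  have "lsg \<sigma> n (\<sigma> b0) + rsg \<sigma> n (\<sigma> b0) = card L + card R"
    unfolding lsg_def rsg_def inv L_def R_def by simp
  also have "\<dots> = card (L \<union> R)" using card_Un_disjoint[OF fL fR d] by simp
  finally show ?thesis using u by simp
qed

theorem mainTheorem6:
  fixes n :: nat and \<sigma> :: "nat \<Rightarrow> nat"
  assumes "n \<ge> 1" and "\<sigma> permutes {1..n}"
  shows "(\<Sum>i\<in>op_set \<sigma> n. lsg \<sigma> n i) + (\<Sum>i\<in>op_set \<sigma> n. rsg \<sigma> n i)
       = (\<Sum>i\<in>clos_set \<sigma> n. lsg \<sigma> n i) + (\<Sum>i\<in>clos_set \<sigma> n. rsg \<sigma> n i)"
proof -
  have inj: "inj \<sigma>" using assms(2) permutes_inj by blast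
  define P where "P = {(a,b). is_run \<sigma> n a b}"
  define lo where "lo = (\<lambda>(a::nat,b::nat). \<sigma> a)"
  define hi where "hi = (\<lambda>(a::nat,b::nat). \<sigma> b)"
  define Q where "Q = {s\<in>P. lo s < hi s}"
  have finP: "finite P" unfolding P_def by (rule runs_finite)
  have le: "\<forall>x\<in>P. lo x \<le> hi x"
    unfolding P_def lo_def hi_def using run_le by (fastforce simp: is_run_def)
  have dist: "\<forall>x\<in>P. \<forall>y\<in>P. x \<noteq> y \<longrightarrow> lo x \<noteq> lo y \<and> hi x \<noteq> hi y \<and> lo x \<noteq> hi y"
  proof (intro ballI impI)
    fix x y assume hx: "x \<in> P" "y \<in> P" "x \<noteq> y"
    obtain a b a' b' where xy: "x = (a,b)" "y = (a',b')" by (cases x, cases y) auto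
    have h: "(a,b) \<in> P" "(a',b') \<in> P" "(a,b) \<noteq> (a',b')" using hx xy by auto
    have r: "is_run \<sigma> n a b" "is_run \<sigma> n a' b'" using h P_def by auto
    have 1: "\<sigma> a \<noteq> \<sigma> a'" using run_unique_start[OF r(1)] r(2) h(3) inj by (auto simp: inj_eq)
    have 2: "\<sigma> b \<noteq> \<sigma> b'" using run_unique_end[OF r(1)] r(2) h(3) inj by (auto simp: inj_eq)
    have 3: "\<sigma> a \<noteq> \<sigma> b'" using lo_hi_distinct[OF inj r] h(3) by auto
    show "lo x \<noteq> lo y \<and> hi x \<noteq> hi y \<and> lo x \<noteq> hi y"
      using 1 2 3 xy unfolding lo_def hi_def by simp
  qed
  have Qeq: "Q = {(a,b). is_run \<sigma> n a b \<and> a < b}"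
  proof -
    have "is_run \<sigma> n a b \<Longrightarrow> (\<sigma> a < \<sigma> b) = (a < b)" for a b
      using run_mono[of \<sigma> n a b a b] by (cases "a < b") (auto simp: is_run_def)
    then show ?thesis unfolding Q_def P_def lo_def hi_def by auto
  qed
  have op: "op_set \<sigma> n = lo ` Q" unfolding op_set_def Qeq lo_def by auto
  have cl: "clos_set \<sigma> n = hi ` Q" unfolding clos_set_def Qeq hi_def by auto
  have injlo: "inj_on lo Q" using dist unfolding inj_on_def Q_def by blast
  have injhi: "inj_on hi Q" using dist unfolding inj_on_def Q_def by blast
  have "(\<Sum>i\<in>op_set \<sigma> n. lsg \<sigma> n i) + (\<Sum>i\<in>op_set \<sigma> n. rsg \<sigma> n i)
      = (\<Sum>i\<in>op_set \<sigma> n. lsg \<sigma> n i + rsg \<sigma> n i)" by (simp add: sum.distrib)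
  also have "\<dots> = (\<Sum>s\<in>Q. lsg \<sigma> n (lo s) + rsg \<sigma> n (lo s))"
    unfolding op by (rule sum.reindex_cong[OF injlo refl]) simp
  also have "\<dots> = (\<Sum>s\<in>Q. card {r\<in>P. lo r < lo s \<and> lo s < hi r})"
  proof (rule sum.cong[OF refl])
    fix s assume "s \<in> Q"
    then obtain a0 b0 where s: "s = (a0,b0)" "is_run \<sigma> n a0 b0" unfolding Q_def P_def by auto
    have "{r\<in>P. lo r < lo s \<and> lo s < hi r} = {(a,b). is_run \<sigma> n a b \<and> \<sigma> a < \<sigma> a0 \<and> \<sigma> a0 < \<sigma> b}"
      unfolding P_def lo_def hi_def s by auto
    then show "lsg \<sigma> n (lo s) + rsg \<sigma> n (lo s) = card {r\<in>P. lo r < lo s \<and> lo s < hi r}"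
      using lsg_rsg_start[OF inj s(2)] unfolding s lo_def by simp
  qed
  also have "\<dots> = (\<Sum>s\<in>Q. card {r\<in>P. lo r < hi s \<and> hi s < hi r})"
    unfolding Q_def by (rule count_swap[OF finP le dist])
  also have "\<dots> = (\<Sum>s\<in>Q. lsg \<sigma> n (hi s) + rsg \<sigma> n (hi s))"
  proof (rule sum.cong[OF refl])
    fix s assume "s \<in> Q"
    then obtain a0 b0 where s: "s = (a0,b0)" "is_run \<sigma> n a0 b0" unfolding Q_def P_def by auto
    have "{r\<in>P. lo r < hi s \<and> hi s < hi r} = {(a,b). is_run \<sigma> n a b \<and> \<sigma> a < \<sigma> b0 \<and> \<sigma> b0 < \<sigma> b}"
      unfolding P_def lo_def hi_def s by auto
    then show "card {r\<in>P. lo r < hi s \<and> hi s < hi r} = lsg \<sigma> n (hi s) + rsg \<sigma> n (hi s)"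
      using lsg_rsg_end[OF inj s(2)] unfolding s hi_def by simp
  qed
  also have "\<dots> = (\<Sum>i\<in>clos_set \<sigma> n. lsg \<sigma> n i + rsg \<sigma> n i)"
    unfolding cl by (rule sum.reindex_cong[OF injhi refl, symmetric]) simp
  also have "\<dots> = (\<Sum>i\<in>clos_set \<sigma> n. lsg \<sigma> n i) + (\<Sum>i\<in>clos_set \<sigma> n. rsg \<sigma> n i)"
    by (simp add: sum.distrib)
  finally show ?thesis .
qed

end
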